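(* For every positive $\alpha=(\alpha_x)_{x\in V}$ and every $k\in\mathbb N$, $$\inf_{\xi\in\Xi_{k-1}}\mathrm{gap}_{\rm RW}(\alpha+\xi)\ge\frac{\alpha_{\min}}{\alpha_{\min}+k-1}\,\mathrm{gap}_{\rm RW}(\alpha),$$ where $\alpha_{\min}=\min_x\alpha_x$.
   Context: $V$ is a finite set with symmetric non-negative weights $c_{xy}=c_{yx}\ge0$ forming a connected graph. $\Xi_{k-1}:=\{\xi\in\mathbb N_0^V:\sum_x\xi_x=k-1\}$ and $\alpha+\xi=(\alpha_x+\xi_x)_{x\in V}$. For a positive weight vector $\beta$, $\mathrm{gap}_{\rm RW}(\beta)$ is the smallest nonzero eigenvalue of $-A_\beta$, where $A_\beta\phi(x)=\sum_yc_{xy}\beta_y(\phi(y)-\phi(x))$ for $\phi:V\to\mathbb R$. *)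

theory Defs
  imports Main "HOL-Analysis.Analysis"
begin

definition A_gen :: "'a set \<Rightarrow> ('a \<Rightarrow> 'a \<Rightarrow> real) \<Rightarrow> ('a \<Rightarrow> real) \<Rightarrow> ('a \<Rightarrow> real) \<Rightarrow> 'a \<Rightarrow> real" where
  "A_gen V c \<beta> \<phi> x = (\<Sum>y\<in>V. c x y * \<beta> y * (\<phi> y - \<phi> x))"

definition is_eigenvalue_negA :: "'a set \<Rightarrow> ('a \<Rightarrow> 'a \<Rightarrow> real) \<Rightarrow> ('a \<Rightarrow> real) \<Rightarrow> real \<Rightarrow> bool" where
  "is_eigenvalue_negA V c \<beta> ev \<longleftrightarrow>
     (\<exists>\<phi>::'a \<Rightarrow> real. (\<exists>x\<in>V. \<phi> x \<noteq> 0) \<and> (\<forall>x\<in>V. - A_gen V c \<beta> \<phi> x = ev * \<phi> x))"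

definition gap_RW :: "'a set \<Rightarrow> ('a \<Rightarrow> 'a \<Rightarrow> real) \<Rightarrow> ('a \<Rightarrow> real) \<Rightarrow> real" where
  "gap_RW V c \<beta> = Inf {ev. ev \<noteq> 0 \<and> is_eigenvalue_negA V c \<beta> ev}"

definition Xi :: "'a set \<Rightarrow> nat \<Rightarrow> ('a \<Rightarrow> nat) set" where
  "Xi V m = {\<xi>. (\<forall>x. x \<notin> V \<longrightarrow> \<xi> x = 0) \<and> (\<Sum>x\<in>V. \<xi> x) = m}"

definition connected_weights :: "'a set \<Rightarrow> ('a \<Rightarrow> 'a \<Rightarrow> real) \<Rightarrow> bool" where
  "connected_weights V c \<longleftrightarrow>
     (\<forall>x\<in>V. \<forall>y\<in>V. (x, y) \<in> ({(u, v). u \<in> V \<and> v \<in> V \<and> c u v > 0})\<^sup>*)"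

end

theory Submission imports Defs begin

lemma exists_min:
  fixes f L N :: "('a \<Rightarrow> real) \<Rightarrow> real" and V :: "'a set"
  defines "X \<equiv> product_topology (\<lambda>_. euclideanreal) V"
  assumes "finite V" and cf: "continuous_map X euclideanreal f"
    and cL: "continuous_map X euclideanreal L" and cN: "continuous_map X euclideanreal N"
    and ne: "\<exists>\<phi>\<in>topspace X. L \<phi> = 0 \<and> N \<phi> = 1"
    and bd: "\<And>\<phi> x. \<phi> \<in> topspace X \<Longrightarrow> N \<phi> = 1 \<Longrightarrow> x \<in> V \<Longrightarrow> \<bar>\<phi> x\<bar> \<le> R"
  shows "\<exists>\<phi>0\<in>topspace X. L \<phi>0 = 0 \<and> N \<phi>0 = 1 \<and>
           (\<forall>\<phi>\<in>topspace X. L \<phi> = 0 \<and> N \<phi> = 1 \<longrightarrow> f \<phi>0 \<le> f \<phi>)"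
proof -
  define M where "M = {\<phi> \<in> topspace X. L \<phi> \<in> {0}} \<inter> {\<phi> \<in> topspace X. N \<phi> \<in> {1}}"
  define K where "K = PiE V (\<lambda>_. {-R..R})"
  have cK: "compactin X K" unfolding K_def X_def
    by (simp add: compactin_PiE)
  have cM: "closedin X M" unfolding M_def
    by (intro closedin_Int closedin_continuous_map_preimage[OF cL] closedin_continuous_map_preimage[OF cN]) auto
  have sub: "M \<subseteq> K"
  proof
    fix \<phi> assume "\<phi> \<in> M"
    then have "\<phi> \<in> topspace X" "N \<phi> = 1" by (auto simp: M_def)
    have "\<forall>x\<in>V. \<phi> x \<in> {-R..R}"
    proof
      fix x assume "x \<in> V"
      then have "\<bar>\<phi> x\<bar> \<le> R" using bd \<open>\<phi> \<in> topspace X\<close> \<open>N \<phi> = 1\<close> by blast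
      then show "\<phi> x \<in> {-R..R}" by (simp add: abs_le_iff)
    qed
    then show "\<phi> \<in> K" using \<open>\<phi> \<in> topspace X\<close> unfolding K_def X_def
      by (auto simp: PiE_iff)
  qed
  have "compactin X M" using closed_compactin[OF cK sub cM] .
  then have "compact (f ` M)" using image_compactin[OF _ cf] by auto
  moreover have "f ` M \<noteq> {}" using ne by (auto simp: M_def)
  ultimately obtain s where "s \<in> f ` M" "\<forall>t\<in>f ` M. s \<le> t"
    using compact_attains_inf by blast
  then show ?thesis by (auto simp: M_def)
qed

definition Gop :: "'a set \<Rightarrow> ('a \<Rightarrow> 'a \<Rightarrow> real) \<Rightarrow> ('a \<Rightarrow> real) \<Rightarrow> ('a \<Rightarrow> real) \<Rightarrow> 'a \<Rightarrow> real" where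
  "Gop V c w \<phi> x = (\<Sum>y\<in>V. c x y * w y * (\<phi> x - \<phi> y))"

definition D2 :: "'a set \<Rightarrow> ('a \<Rightarrow> 'a \<Rightarrow> real) \<Rightarrow> ('a \<Rightarrow> real) \<Rightarrow> ('a \<Rightarrow> real) \<Rightarrow> ('a \<Rightarrow> real) \<Rightarrow> real" where
  "D2 V c w \<psi> \<phi> = (\<Sum>x\<in>V. \<Sum>y\<in>V. c x y * w x * w y * ((\<psi> x - \<psi> y) * (\<phi> x - \<phi> y)))"

lemma negA: "- A_gen V c w \<phi> x = Gop V c w \<phi> x"
  unfolding A_gen_def Gop_def
  by (subst sum_negf[symmetric]) (intro sum.cong refl, simp add: algebra_simps)

lemma green:
  assumes "finite V" and sym: "\<And>x y. c x y = c y x"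
  shows "(\<Sum>x\<in>V. w x * \<psi> x * Gop V c w \<phi> x) = D2 V c w \<psi> \<phi> / 2"
proof -
  have 1: "(\<Sum>x\<in>V. w x * \<psi> x * Gop V c w \<phi> x) = (\<Sum>x\<in>V. \<Sum>y\<in>V. c x y * w x * w y * (\<psi> x * (\<phi> x - \<phi> y)))"
    by (simp add: Gop_def sum_distrib_left mult_ac)
  have 2: "(\<Sum>x\<in>V. \<Sum>y\<in>V. c x y * w x * w y * (\<psi> x * (\<phi> x - \<phi> y)))
        = (\<Sum>x\<in>V. \<Sum>y\<in>V. c x y * w x * w y * (\<psi> y * (\<phi> y - \<phi> x)))"
    by (subst sum.swap) (simp add: sym mult_ac)
  have "D2 V c w \<psi> \<phi> = (\<Sum>x\<in>V. \<Sum>y\<in>V. c x y * w x * w y * (\<psi> x * (\<phi> x - \<phi> y)) + c x y * w x * w y * (\<psi> y * (\<phi> y - \<phi> x)))"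
    unfolding D2_def by (intro sum.cong refl) (simp add: algebra_simps)
  also have "\<dots> = (\<Sum>x\<in>V. \<Sum>y\<in>V. c x y * w x * w y * (\<psi> x * (\<phi> x - \<phi> y))) + (\<Sum>x\<in>V. \<Sum>y\<in>V. c x y * w x * w y * (\<psi> y * (\<phi> y - \<phi> x)))"
    by (simp add: sum.distrib)
  finally show ?thesis using 1 2 by simp
qed

lemma D2_sym: "D2 V c w \<psi> \<phi> = D2 V c w \<phi> \<psi>"
  unfolding D2_def by (simp add: mult_ac)

lemma D2_nonneg:
  assumes "\<And>x y. c x y \<ge> 0" and "\<And>x. x \<in> V \<Longrightarrow> w x > 0"
  shows "D2 V c w \<phi> \<phi> \<ge> 0"
  unfolding D2_def using assms by (intro sum_nonneg) (simp add: less_imp_le)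

lemma D2_zero:
  assumes "finite V" "\<And>x y. c x y \<ge> 0" and "\<And>x. x \<in> V \<Longrightarrow> w x > 0"
    and "D2 V c w \<phi> \<phi> = 0" and "x \<in> V" "y \<in> V" "c x y > 0"
  shows "\<phi> x = \<phi> y"
proof -
  have nn: "\<And>x y. x \<in> V \<Longrightarrow> y \<in> V \<Longrightarrow> 0 \<le> c x y * w x * w y * ((\<phi> x - \<phi> y) * (\<phi> x - \<phi> y))"
  proof -
    fix x y assume "x \<in> V" "y \<in> V"
    then have "0 \<le> w x" "0 \<le> w y" using assms(3) less_imp_le by blast+
    then have "0 \<le> c x y * w x * w y" using assms(2) by (intro mult_nonneg_nonneg)
    moreover have "0 \<le> (\<phi> x - \<phi> y) * (\<phi> x - \<phi> y)" by simp
    ultimately show "0 \<le> c x y * w x * w y * ((\<phi> x - \<phi> y) * (\<phi> x - \<phi> y))" by (rule mult_nonneg_nonneg)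
  qed
  have "(\<Sum>y\<in>V. c x y * w x * w y * ((\<phi> x - \<phi> y) * (\<phi> x - \<phi> y))) = 0"
  proof -
    define F where "F x = (\<Sum>y\<in>V. c x y * w x * w y * ((\<phi> x - \<phi> y) * (\<phi> x - \<phi> y)))" for x
    have "\<forall>x\<in>V. 0 \<le> F x" unfolding F_def using nn by (simp add: sum_nonneg)
    moreover have "sum F V = 0" using assms(4) unfolding D2_def F_def by simp
    ultimately have "\<forall>x\<in>V. F x = 0" using sum_nonneg_eq_0_iff[OF assms(1), of F] by simp
    then show ?thesis using assms(5) unfolding F_def by blast
  qed
  then have "c x y * w x * w y * ((\<phi> x - \<phi> y) * (\<phi> x - \<phi> y)) = 0"
    using nn[OF assms(5)] assms(6) by (simp add: sum_nonneg_eq_0_iff[OF assms(1)])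
  moreover have "c x y \<noteq> 0" "w x \<noteq> 0" "w y \<noteq> 0" using assms(3)[OF assms(5)] assms(3)[OF assms(6)] assms(7) by auto
  ultimately show ?thesis by simp
qed

lemma D2_const:
  assumes "finite V" "\<And>x y. c x y \<ge> 0" and "\<And>x. x \<in> V \<Longrightarrow> w x > 0"
    and "D2 V c w \<phi> \<phi> = 0" and conn: "connected_weights V c" and "x \<in> V" "y \<in> V"
  shows "\<phi> x = \<phi> y"
proof -
  have "(x, y) \<in> ({(u, v). u \<in> V \<and> v \<in> V \<and> c u v > 0})\<^sup>*"
    using conn assms by (auto simp: connected_weights_def)
  then show ?thesis
  proof (induction rule: rtrancl_induct)
    case base then show ?case by simp
  next
    case (step y z)
    then have "y \<in> V" "z \<in> V" "c y z > 0" by auto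
    then have "\<phi> y = \<phi> z" using D2_zero[OF assms(1-4)] by blast
    then show ?case using step.IH by simp
  qed
qed

lemma quad_zero:
  fixes D E :: real
  assumes "\<And>t. 0 \<le> 2*t*D + t^2*E"
  shows "D = 0"
proof -
  define a where "a = \<bar>E\<bar> + 1"
  have a: "a > 0" "E \<le> a" unfolding a_def by auto
  define u where "u = D / a"
  have Du: "D = u * a" using a unfolding u_def by simp
  have h: "0 \<le> 2*(-u)*(u*a) + (-u)^2*E" using assms[of "-u"] Du by simp
  have e: "2*(-u)*(u*a) + (-u)^2*E = u^2*(E - 2*a)" by (simp add: power2_eq_square algebra_simps)
  have "u^2*(E - 2*a) \<le> u^2*(-a)" using a by (intro mult_left_mono) auto
  then have "0 \<le> u^2 * (-a)" using h e by linarith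
  then have "u^2 * a \<le> 0" by simp
  then have "u^2 \<le> 0" using a by (simp add: mult_le_0_iff)
  then have "u = 0" by simp
  then show ?thesis using Du by simp
qed

lemma Gop_lin: "Gop V c w (\<lambda>x. \<phi> x + t * \<psi> x) x = Gop V c w \<phi> x + t * Gop V c w \<psi> x"
proof -
  have "Gop V c w (\<lambda>x. \<phi> x + t * \<psi> x) x = (\<Sum>y\<in>V. c x y * w y * (\<phi> x - \<phi> y) + t * (c x y * w y * (\<psi> x - \<psi> y)))"
    unfolding Gop_def by (intro sum.cong refl) (simp add: algebra_simps)
  also have "\<dots> = Gop V c w \<phi> x + t * Gop V c w \<psi> x"
    unfolding Gop_def by (simp add: sum.distrib sum_distrib_left)
  finally show ?thesis .
qed

lemma Gop_sum_zero:
  assumes "finite V" and "\<And>x y. c x y = c y x"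
  shows "(\<Sum>x\<in>V. w x * Gop V c w \<phi> x) = 0"
proof -
  have "(\<Sum>x\<in>V. w x * (\<lambda>_. 1::real) x * Gop V c w \<phi> x) = D2 V c w (\<lambda>_. 1) \<phi> / 2"
    by (rule green[OF assms])
  moreover have "D2 V c w (\<lambda>_. 1) \<phi> = 0" unfolding D2_def by simp
  ultimately show ?thesis by simp
qed

lemma D2_cong:
  assumes "\<And>x. x \<in> V \<Longrightarrow> \<phi> x = \<psi> x"
  shows "D2 V c w \<phi> \<phi> = D2 V c w \<psi> \<psi>"
  unfolding D2_def using assms by (intro sum.cong refl) simp

lemma D2_scale: "D2 V c w (\<lambda>x. a * \<phi> x) (\<lambda>x. a * \<phi> x) = a^2 * D2 V c w \<phi> \<phi>"
  unfolding D2_def sum_distrib_left by (intro sum.cong refl) (simp add: algebra_simps power2_eq_square)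

lemma D2_shift: "D2 V c w (\<lambda>x. \<phi> x - m) (\<lambda>x. \<phi> x - m) = D2 V c w \<phi> \<phi>"
  unfolding D2_def by simp

lemma two_point_sum:
  assumes "finite V" "a \<in> V" "b \<in> V" "a \<noteq> b" "\<And>x. x \<in> V \<Longrightarrow> x \<noteq> a \<Longrightarrow> x \<noteq> b \<Longrightarrow> g x = 0"
  shows "sum g V = g a + g b"
proof -
  have "sum g V = sum g {a, b}"
    using assms by (intro sum.mono_neutral_right) auto
  then show ?thesis using assms(4) by simp
qed

lemma abs_le_one_plus_sq: "\<bar>t::real\<bar> \<le> 1 + t^2"
proof -
  have "0 \<le> (\<bar>t\<bar> - 1)^2" by simp
  moreover have "(\<bar>t\<bar> - 1)^2 = t^2 - 2*\<bar>t\<bar> + 1"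
    by (simp add: power2_eq_square algebra_simps)
  ultimately have "0 \<le> t^2 - 2*\<bar>t\<bar> + 1" by linarith
  moreover have "0 \<le> t^2" by simp
  ultimately show ?thesis by linarith
qed

lemma eig_props:
  assumes fin: "finite V" and sym: "\<And>x y. c x y = c y x" and cnn: "\<And>x y. c x y \<ge> 0"
    and wpos: "\<And>x. x \<in> V \<Longrightarrow> w x > 0" and ev: "is_eigenvalue_negA V c w e"
  obtains \<phi> where "\<forall>x\<in>V. Gop V c w \<phi> x = e * \<phi> x" "(\<Sum>x\<in>V. w x * (\<phi> x)^2) > 0"
    "e * (\<Sum>x\<in>V. w x * (\<phi> x)^2) = D2 V c w \<phi> \<phi> / 2"
proof -
  obtain \<phi> x0 where x0: "x0 \<in> V" "\<phi> x0 \<noteq> 0" and eq: "\<forall>x\<in>V. Gop V c w \<phi> x = e * \<phi> x"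
    using ev unfolding is_eigenvalue_negA_def negA by blast
  have pos: "(\<Sum>x\<in>V. w x * (\<phi> x)^2) > 0"
  proof (rule sum_pos2[OF fin x0(1)])
    show "0 < w x0 * (\<phi> x0)^2" using wpos[OF x0(1)] x0(2) by simp
    show "0 \<le> w x * (\<phi> x)^2" if "x \<in> V" for x using wpos[OF that] by simp
  qed
  have "(\<Sum>x\<in>V. w x * \<phi> x * Gop V c w \<phi> x) = e * (\<Sum>x\<in>V. w x * (\<phi> x)^2)"
    unfolding sum_distrib_left using eq by (intro sum.cong refl) (simp add: power2_eq_square)
  then have "e * (\<Sum>x\<in>V. w x * (\<phi> x)^2) = D2 V c w \<phi> \<phi> / 2" using green[OF fin sym] by simp
  then show ?thesis using that eq pos by blast
qed

lemma eig_nonneg: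
  assumes fin: "finite V" and sym: "\<And>x y. c x y = c y x" and cnn: "\<And>x y. c x y \<ge> 0"
    and wpos: "\<And>x. x \<in> V \<Longrightarrow> w x > 0" and ev: "is_eigenvalue_negA V c w e"
  shows "e \<ge> 0"
proof -
  obtain \<phi> where pos: "(\<Sum>x\<in>V. w x * (\<phi> x)^2) > 0"
    and eq: "e * (\<Sum>x\<in>V. w x * (\<phi> x)^2) = D2 V c w \<phi> \<phi> / 2"
    using eig_props[OF assms] by blast
  have "D2 V c w \<phi> \<phi> \<ge> 0" using D2_nonneg cnn wpos by blast
  then have "e * (\<Sum>x\<in>V. w x * (\<phi> x)^2) \<ge> 0" using eq by simp
  then show ?thesis using pos by (simp add: zero_le_mult_iff)
qed

lemma gap_witness:
  assumes fin: "finite V" and card: "card V \<ge> 2" and sym: "\<And>x y. c x y = c y x"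
    and cnn: "\<And>x y. c x y \<ge> 0" and conn: "connected_weights V c"
    and wpos: "\<And>x. x \<in> V \<Longrightarrow> w x > 0"
  shows "\<exists>\<mu>. \<mu> \<noteq> 0 \<and> is_eigenvalue_negA V c w \<mu> \<and> \<mu> \<ge> 0 \<and>
     (\<forall>\<phi>. (\<Sum>x\<in>V. w x * \<phi> x) = 0 \<longrightarrow> \<mu> * (\<Sum>x\<in>V. w x * (\<phi> x)^2) \<le> D2 V c w \<phi> \<phi> / 2)"
proof -
  define X where "X = product_topology (\<lambda>_. euclideanreal) V"
  define L where "L \<phi> = (\<Sum>x\<in>V. w x * \<phi> x)" for \<phi> :: "'a \<Rightarrow> real"
  define N where "N \<phi> = (\<Sum>x\<in>V. w x * (\<phi> x)^2)" for \<phi> :: "'a \<Rightarrow> real"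
  define f where "f \<phi> = D2 V c w \<phi> \<phi> / 2" for \<phi> :: "'a \<Rightarrow> real"
  have wnn: "x \<in> V \<Longrightarrow> 0 \<le> w x" for x using wpos less_imp_le by blast
  have Nnn: "N \<phi> \<ge> 0" for \<phi> unfolding N_def using wnn by (intro sum_nonneg) simp
  have fnn: "f \<phi> \<ge> 0" for \<phi> unfolding f_def using D2_nonneg[OF cnn wpos] by simp
  have top: "restrict g V \<in> topspace X" for g unfolding X_def by simp
  have Lr: "L (restrict g V) = L g" for g unfolding L_def by (intro sum.cong) auto
  have Nr: "N (restrict g V) = N g" for g unfolding N_def by (intro sum.cong) auto
  have fr: "f (restrict g V) = f g" for g unfolding f_def by (subst D2_cong[of V _ g]) auto
  have Ls: "L (\<lambda>x. a * g x) = a * L g" for a g unfolding L_def sum_distrib_left by (simp add: mult_ac)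
  have Ns: "N (\<lambda>x. a * g x) = a^2 * N g" for a g unfolding N_def sum_distrib_left
    by (simp add: mult_ac power_mult_distrib)
  have fs: "f (\<lambda>x. a * g x) = a^2 * f g" for a g unfolding f_def D2_scale by simp
  define nz where "nz g = restrict (\<lambda>x. inverse (sqrt (N g)) * g x) V" for g
  have nz: "nz g \<in> topspace X \<and> L (nz g) = 0 \<and> N (nz g) = 1 \<and> f (nz g) = f g / N g"
    if "L g = 0" "N g > 0" for g
  proof -
    define i where "i = inverse (sqrt (N g))"
    have i2: "i^2 = inverse (N g)" unfolding i_def using that(2)
      by (simp add: power_inverse)
    have e: "nz g = restrict (\<lambda>x. i * g x) V" unfolding nz_def i_def by simp
    have "L (nz g) = i * L g" unfolding e Lr Ls by simp
    moreover have "N (nz g) = inverse (N g) * N g" unfolding e Nr Ns i2 by simp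
    moreover have "f (nz g) = inverse (N g) * f g" unfolding e fr fs i2 by simp
    ultimately show ?thesis using that e top by (simp add: field_simps)
  qed
  have "V \<noteq> {}" using card by auto
  then obtain a where a: "a \<in> V" by blast
  have "V - {a} \<noteq> {}"
  proof
    assume "V - {a} = {}"
    then have "V \<subseteq> {a}" by blast
    then have "card V \<le> card {a}" by (rule card_mono[rotated]) simp
    then show False using card by simp
  qed
  then obtain b where b: "b \<in> V" "b \<noteq> a" by blast
  define \<psi> where "\<psi> x = (if x = a then w b else if x = b then - w a else 0)" for x
  have "L \<psi> = w a * w b + w b * (- w a)" unfolding L_def
    by (subst two_point_sum[OF fin a b(1)]) (use b in \<open>auto simp: \<psi>_def\<close>)
  then have L\<psi>: "L \<psi> = 0" by simp
  have "N \<psi> = w a * (w b)^2 + w b * (- w a)^2" unfolding N_def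
    by (subst two_point_sum[OF fin a b(1)]) (use b in \<open>auto simp: \<psi>_def\<close>)
  moreover have "w a * (w b)^2 + w b * (- w a)^2 > 0" using wpos[OF a] wpos[OF b(1)]
    by (intro add_pos_pos mult_pos_pos) auto
  ultimately have N\<psi>: "N \<psi> > 0" by simp
  have ne: "\<exists>\<phi>\<in>topspace X. L \<phi> = 0 \<and> N \<phi> = 1" using nz[OF L\<psi> N\<psi>] by blast
  define R where "R = 1 + (\<Sum>x\<in>V. 1 / w x)"
  have bd: "\<bar>\<phi> x\<bar> \<le> R" if "\<phi> \<in> topspace X" "N \<phi> = 1" "x \<in> V" for \<phi> x
  proof -
    have "w x * (\<phi> x)^2 \<le> N \<phi>" unfolding N_def
      by (rule member_le_sum[OF that(3)]) (use wnn fin in auto)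
    then have "(\<phi> x)^2 \<le> 1 / w x" using wpos[OF that(3)] that(2) by (simp add: pos_le_divide_eq mult.commute)
    also have "1 / w x \<le> (\<Sum>x\<in>V. 1 / w x)"
      by (rule member_le_sum[OF that(3)]) (use wnn fin in auto)
    finally show ?thesis using abs_le_one_plus_sq[of "\<phi> x"] unfolding R_def by linarith
  qed
  have cL: "continuous_map X euclideanreal L" unfolding X_def L_def
    by (intro continuous_intros) (auto simp: fin)
  have cN: "continuous_map X euclideanreal N" unfolding X_def N_def
    by (intro continuous_intros) (auto simp: fin)
  have cf: "continuous_map X euclideanreal f" unfolding X_def f_def D2_def
    by (intro continuous_intros) (auto simp: fin)
  have ex: "\<exists>\<phi>0\<in>topspace X. L \<phi>0 = 0 \<and> N \<phi>0 = 1 \<and> (\<forall>\<phi>\<in>topspace X. L \<phi> = 0 \<and> N \<phi> = 1 \<longrightarrow> f \<phi>0 \<le> f \<phi>)"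
    unfolding X_def by (rule exists_min[where R=R]) (use fin cf cL cN ne bd in \<open>simp_all add: X_def\<close>)
  then obtain \<phi>0 where \<phi>0: "\<phi>0 \<in> topspace X" "L \<phi>0 = 0" "N \<phi>0 = 1"
    and min: "\<And>\<phi>. \<phi> \<in> topspace X \<Longrightarrow> L \<phi> = 0 \<Longrightarrow> N \<phi> = 1 \<Longrightarrow> f \<phi>0 \<le> f \<phi>"
    by blast
  define \<mu> where "\<mu> = f \<phi>0"
  have P: "\<mu> * N \<phi> \<le> f \<phi>" if "L \<phi> = 0" for \<phi>
  proof (cases "N \<phi> = 0")
    case True then show ?thesis using fnn by simp
  next
    case False
    then have Np: "N \<phi> > 0" using Nnn[of \<phi>] by simp
    have "\<mu> \<le> f (nz \<phi>)" unfolding \<mu>_def using nz[OF that Np] min by blast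
    then have "\<mu> \<le> f \<phi> / N \<phi>" using nz[OF that Np] by simp
    then show ?thesis using Np by (simp add: pos_le_divide_eq)
  qed
  have fG: "f \<phi> = (\<Sum>x\<in>V. w x * \<phi> x * Gop V c w \<phi> x)" for \<phi>
    unfolding f_def using green[OF fin sym] by simp
  have Gs: "(\<Sum>x\<in>V. w x * Gop V c w \<phi> x) = 0" for \<phi> by (rule Gop_sum_zero[OF fin sym])
  define G0 where "G0 x = Gop V c w \<phi>0 x" for x
  have var: "(\<Sum>x\<in>V. w x * \<psi> x * G0 x) = \<mu> * (\<Sum>x\<in>V. w x * \<phi>0 x * \<psi> x)" if L\<psi>: "L \<psi> = 0" for \<psi>
  proof -
    define A where "A = (\<Sum>x\<in>V. w x * \<psi> x * G0 x)"
    define B where "B = (\<Sum>x\<in>V. w x * \<phi>0 x * \<psi> x)"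
    have sy: "(\<Sum>x\<in>V. w x * \<phi>0 x * Gop V c w \<psi> x) = A"
      unfolding A_def G0_def green[OF fin sym] by (simp add: D2_sym)
    have "0 \<le> 2*t*(A - \<mu>*B) + t^2*(f \<psi> - \<mu> * N \<psi>)" for t
    proof -
      define \<phi>t where "\<phi>t x = \<phi>0 x + t * \<psi> x" for x
      have "L \<phi>t = L \<phi>0 + t * L \<psi>" unfolding L_def \<phi>t_def
        by (simp add: algebra_simps sum.distrib sum_distrib_left)
      then have "L \<phi>t = 0" using \<phi>0(2) L\<psi> by simp
      then have Pt: "\<mu> * N \<phi>t \<le> f \<phi>t" by (rule P)
      have "N \<phi>t = (\<Sum>x\<in>V. w x * (\<phi>0 x)^2 + 2*t*(w x * \<phi>0 x * \<psi> x) + t^2 * (w x * (\<psi> x)^2))"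
        unfolding N_def \<phi>t_def by (intro sum.cong refl) (simp add: power2_eq_square algebra_simps)
      also have "\<dots> = N \<phi>0 + 2*t*B + t^2 * N \<psi>"
        unfolding N_def B_def by (simp add: sum.distrib sum_distrib_left)
      finally have Nt: "N \<phi>t = 1 + 2*t*B + t^2 * N \<psi>" using \<phi>0(3) by simp
      have "f \<phi>t = (\<Sum>x\<in>V. w x * \<phi>0 x * G0 x + t * (w x * \<psi> x * G0 x) + t * (w x * \<phi>0 x * Gop V c w \<psi> x) + t^2 * (w x * \<psi> x * Gop V c w \<psi> x))"
        unfolding fG \<phi>t_def Gop_lin G0_def by (intro sum.cong refl) (simp add: power2_eq_square algebra_simps)
      also have "\<dots> = f \<phi>0 + t * A + t * (\<Sum>x\<in>V. w x * \<phi>0 x * Gop V c w \<psi> x) + t^2 * f \<psi>"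
        unfolding fG A_def G0_def by (simp add: sum.distrib sum_distrib_left)
      also have "\<dots> = f \<phi>0 + t * A + t * A + t^2 * f \<psi>" unfolding sy ..
      finally have ft: "f \<phi>t = \<mu> + 2*t*A + t^2 * f \<psi>" unfolding \<mu>_def by simp
      have "\<mu> * (1 + 2*t*B + t^2 * N \<psi>) \<le> \<mu> + 2*t*A + t^2 * f \<psi>" using Pt Nt ft by simp
      then show ?thesis by (simp add: algebra_simps)
    qed
    then have "A - \<mu>*B = 0" by (rule quad_zero)
    then show ?thesis unfolding A_def B_def by simp
  qed
  define g where "g x = G0 x - \<mu> * \<phi>0 x" for x
  have "L g = (\<Sum>x\<in>V. w x * G0 x) - \<mu> * L \<phi>0" unfolding L_def g_def
    by (simp add: algebra_simps sum_subtractf sum_distrib_left)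
  then have Lg: "L g = 0" using Gs[of \<phi>0] \<phi>0(2) unfolding G0_def by simp
  have "(\<Sum>x\<in>V. w x * (g x)^2) = (\<Sum>x\<in>V. w x * g x * G0 x) - \<mu> * (\<Sum>x\<in>V. w x * \<phi>0 x * g x)"
  proof -
    have "(\<Sum>x\<in>V. w x * (g x)^2) = (\<Sum>x\<in>V. w x * g x * G0 x - \<mu> * (w x * \<phi>0 x * g x))"
      by (intro sum.cong refl) (simp add: g_def power2_eq_square algebra_simps)
    then show ?thesis by (simp add: sum_subtractf sum_distrib_left)
  qed
  then have "(\<Sum>x\<in>V. w x * (g x)^2) = 0" using var[OF Lg] by simp
  then have g0: "\<forall>x\<in>V. w x * (g x)^2 = 0"
    using sum_nonneg_eq_0_iff[OF fin, of "\<lambda>x. w x * (g x)^2"] wnn by simp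
  have eig: "\<forall>x\<in>V. - A_gen V c w \<phi>0 x = \<mu> * \<phi>0 x"
  proof
    fix x assume x: "x \<in> V"
    have "w x * (g x)^2 = 0" using g0 x by blast
    then have "g x = 0" using wpos[OF x] by simp
    then show "- A_gen V c w \<phi>0 x = \<mu> * \<phi>0 x" unfolding negA g_def G0_def by simp
  qed
  have nzx: "\<exists>x\<in>V. \<phi>0 x \<noteq> 0"
  proof (rule ccontr)
    assume "\<not> ?thesis"
    then have "N \<phi>0 = 0" unfolding N_def by simp
    then show False using \<phi>0(3) by simp
  qed
  have ev: "is_eigenvalue_negA V c w \<mu>" unfolding is_eigenvalue_negA_def using eig nzx by blast
  have mu0: "\<mu> \<noteq> 0"
  proof
    assume "\<mu> = 0"
    then have D0: "D2 V c w \<phi>0 \<phi>0 = 0" unfolding \<mu>_def f_def by simp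
    have cst: "\<phi>0 x = \<phi>0 a" if "x \<in> V" for x
      by (rule D2_const[OF fin cnn wpos D0 conn that a])
    have "L \<phi>0 = \<phi>0 a * (\<Sum>x\<in>V. w x)" unfolding L_def sum_distrib_left
      using cst by (intro sum.cong refl) simp
    moreover have "(\<Sum>x\<in>V. w x) > 0" using sum_pos2[OF fin a, of w] wpos[OF a] wnn by simp
    ultimately have "\<phi>0 a = 0" using \<phi>0(2) by simp
    then show False using nzx cst by auto
  qed
  have "\<mu> \<ge> 0" unfolding \<mu>_def by (rule fnn)
  then show ?thesis using mu0 ev P unfolding L_def N_def f_def by blast
qed

theorem lemma3p4:
  fixes V :: "'a set" and c :: "'a \<Rightarrow> 'a \<Rightarrow> real" and \<alpha> :: "'a \<Rightarrow> real" and k :: nat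
  assumes "finite V" and "card V \<ge> 2"
    and "\<And>x y. c x y = c y x" and "\<And>x y. c x y \<ge> 0"
    and "connected_weights V c"
    and "\<And>x. x \<in> V \<Longrightarrow> \<alpha> x > 0"
    and "k \<ge> 1"
  shows "(INF \<xi>\<in>Xi V (k - 1). gap_RW V c (\<lambda>x. \<alpha> x + real (\<xi> x)))
           \<ge> Min (\<alpha> ` V) / (Min (\<alpha> ` V) + real k - 1) * gap_RW V c \<alpha>"
proof -
  note fin = assms(1) and card = assms(2) and sym = assms(3) and cnn = assms(4)
    and conn = assms(5) and apos = assms(6) and k1 = assms(7)
  obtain \<mu> where H: "\<mu> \<noteq> 0 \<and> is_eigenvalue_negA V c \<alpha> \<mu> \<and> \<mu> \<ge> 0 \<and>
     (\<forall>\<phi>. (\<Sum>x\<in>V. \<alpha> x * \<phi> x) = 0 \<longrightarrow> \<mu> * (\<Sum>x\<in>V. \<alpha> x * (\<phi> x)^2) \<le> D2 V c \<alpha> \<phi> \<phi> / 2)"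
    using gap_witness[where w=\<alpha>, OF fin card sym cnn conn apos] by blast
  have \<mu>0: "\<mu> \<noteq> 0" and ev\<alpha>: "is_eigenvalue_negA V c \<alpha> \<mu>" and \<mu>nn: "\<mu> \<ge> 0" using H by simp_all
  have P\<alpha>: "\<mu> * (\<Sum>x\<in>V. \<alpha> x * (\<phi> x)^2) \<le> D2 V c \<alpha> \<phi> \<phi> / 2" if "(\<Sum>x\<in>V. \<alpha> x * \<phi> x) = 0" for \<phi>
    using H that by simp
  have g\<alpha>: "gap_RW V c \<alpha> \<le> \<mu>" unfolding gap_RW_def
  proof (rule cInf_lower)
    show "\<mu> \<in> {ev. ev \<noteq> 0 \<and> is_eigenvalue_negA V c \<alpha> ev}" using \<mu>0 ev\<alpha> by simp
    show "bdd_below {ev. ev \<noteq> 0 \<and> is_eigenvalue_negA V c \<alpha> ev}"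
      using eig_nonneg[where w=\<alpha>, OF fin sym cnn apos] by (intro bdd_belowI[of _ 0]) auto
  qed
  have "V \<noteq> {}" using card by auto
  then obtain a where a: "a \<in> V" by blast
  define am where "am = Min (\<alpha> ` V)"
  have am_in: "am \<in> \<alpha> ` V" unfolding am_def using fin \<open>V \<noteq> {}\<close> by (intro Min_in) auto
  then have am0: "am > 0" using apos by auto
  have am_le: "am \<le> \<alpha> x" if "x \<in> V" for x unfolding am_def using fin that by (intro Min_le) auto
  define K where "K = am + real k - 1"
  have K0: "K > 0" "K \<ge> am" unfolding K_def using am0 k1 by auto
  have main: "am / K * gap_RW V c \<alpha> \<le> gap_RW V c (\<lambda>x. \<alpha> x + real (\<xi> x))" if \<xi>: "\<xi> \<in> Xi V (k - 1)" for \<xi>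
  proof -
    define \<beta> where "\<beta> x = \<alpha> x + real (\<xi> x)" for x
    have \<beta>eq: "(\<lambda>x. \<alpha> x + real (\<xi> x)) = \<beta>" unfolding \<beta>_def by simp
    have \<xi>le: "real (\<xi> x) \<le> real k - 1" if "x \<in> V" for x
    proof -
      have "\<xi> x \<le> (\<Sum>y\<in>V. \<xi> y)" by (rule member_le_sum[OF that]) (use fin in auto)
      also have "\<dots> = k - 1" using \<xi> unfolding Xi_def by simp
      finally have "\<xi> x \<le> k - 1" .
      then have "real (\<xi> x) \<le> real (k - 1)" by (rule of_nat_mono)
      then show ?thesis using k1 by (simp add: of_nat_diff)
    qed
    have \<beta>pos: "\<beta> x > 0" if "x \<in> V" for x unfolding \<beta>_def using apos[OF that] by simp
    have \<beta>ge: "\<alpha> x \<le> \<beta> x" for x unfolding \<beta>_def by simp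
    have \<beta>bd: "am * \<beta> x \<le> K * \<alpha> x" if x: "x \<in> V" for x
    proof -
      have "am * real (\<xi> x) \<le> \<alpha> x * (real k - 1)"
        by (rule mult_mono) (use am_le[OF x] \<xi>le[OF x] apos[OF x] in auto)
      then show ?thesis unfolding \<beta>_def K_def by (simp add: algebra_simps)
    qed
    have key: "am / K * gap_RW V c \<alpha> \<le> e" if e: "e \<noteq> 0" "is_eigenvalue_negA V c \<beta> e" for e
    proof -
      obtain \<phi> where eq: "\<forall>x\<in>V. Gop V c \<beta> \<phi> x = e * \<phi> x"
        and pos: "(\<Sum>x\<in>V. \<beta> x * (\<phi> x)^2) > 0"
        and ray: "e * (\<Sum>x\<in>V. \<beta> x * (\<phi> x)^2) = D2 V c \<beta> \<phi> \<phi> / 2"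
        using eig_props[where w=\<beta>, OF fin sym cnn \<beta>pos e(2)] by blast
      define Nb where "Nb = (\<Sum>x\<in>V. \<beta> x * (\<phi> x)^2)"
      have "(\<Sum>x\<in>V. \<beta> x * Gop V c \<beta> \<phi> x) = e * (\<Sum>x\<in>V. \<beta> x * \<phi> x)"
        unfolding sum_distrib_left using eq by (intro sum.cong refl) simp
      then have L\<beta>: "(\<Sum>x\<in>V. \<beta> x * \<phi> x) = 0" using Gop_sum_zero[OF fin sym] e(1) by simp
      have D2mono: "D2 V c \<alpha> \<phi> \<phi> \<le> D2 V c \<beta> \<phi> \<phi>" unfolding D2_def
      proof (intro sum_mono)
        fix x y assume x: "x \<in> V" and y: "y \<in> V"
        have "\<alpha> x * \<alpha> y \<le> \<beta> x * \<beta> y"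
          by (rule mult_mono) (use \<beta>ge[of x] \<beta>ge[of y] apos[OF x] apos[OF y] in \<open>auto simp: less_imp_le\<close>)
        moreover have "0 \<le> c x y * ((\<phi> x - \<phi> y) * (\<phi> x - \<phi> y))" using cnn by simp
        ultimately have "(\<alpha> x * \<alpha> y) * (c x y * ((\<phi> x - \<phi> y) * (\<phi> x - \<phi> y)))
            \<le> (\<beta> x * \<beta> y) * (c x y * ((\<phi> x - \<phi> y) * (\<phi> x - \<phi> y)))"
          by (rule mult_right_mono)
        then show "c x y * \<alpha> x * \<alpha> y * ((\<phi> x - \<phi> y) * (\<phi> x - \<phi> y))
            \<le> c x y * \<beta> x * \<beta> y * ((\<phi> x - \<phi> y) * (\<phi> x - \<phi> y))"
          by (simp add: mult_ac)
      qed
      have S\<alpha>: "(\<Sum>x\<in>V. \<alpha> x) > 0" using sum_pos2[OF fin a, of \<alpha>] apos[OF a] apos by (simp add: less_imp_le)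
      define m where "m = (\<Sum>x\<in>V. \<alpha> x * \<phi> x) / (\<Sum>x\<in>V. \<alpha> x)"
      define \<phi>m where "\<phi>m x = \<phi> x - m" for x
      have "(\<Sum>x\<in>V. \<alpha> x * \<phi>m x) = (\<Sum>x\<in>V. \<alpha> x * \<phi> x) - m * (\<Sum>x\<in>V. \<alpha> x)"
        unfolding \<phi>m_def by (simp add: right_diff_distrib sum_subtractf sum_distrib_left mult.commute)
      then have L\<alpha>m: "(\<Sum>x\<in>V. \<alpha> x * \<phi>m x) = 0" unfolding m_def using S\<alpha> by simp
      define Nam where "Nam = (\<Sum>x\<in>V. \<alpha> x * (\<phi>m x)^2)"
      define Nbm where "Nbm = (\<Sum>x\<in>V. \<beta> x * (\<phi>m x)^2)"
      have c1: "\<mu> * Nam \<le> e * Nb"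
      proof -
        have "\<mu> * Nam \<le> D2 V c \<alpha> \<phi>m \<phi>m / 2" unfolding Nam_def by (rule P\<alpha>[OF L\<alpha>m])
        also have "D2 V c \<alpha> \<phi>m \<phi>m = D2 V c \<alpha> \<phi> \<phi>" unfolding \<phi>m_def by (rule D2_shift)
        also have "\<dots> / 2 \<le> D2 V c \<beta> \<phi> \<phi> / 2" using D2mono by simp
        finally show ?thesis using ray unfolding Nb_def by simp
      qed
      have c2: "am * Nbm \<le> K * Nam" unfolding Nbm_def Nam_def sum_distrib_left
      proof (intro sum_mono)
        fix x assume x: "x \<in> V"
        have "(am * \<beta> x) * (\<phi>m x)^2 \<le> (K * \<alpha> x) * (\<phi>m x)^2"
          by (rule mult_right_mono) (use \<beta>bd[OF x] in auto)
        then show "am * (\<beta> x * (\<phi>m x)^2) \<le> K * (\<alpha> x * (\<phi>m x)^2)" by (simp add: mult_ac)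
      qed
      have c3: "Nb \<le> Nbm"
      proof -
        have "Nbm = (\<Sum>x\<in>V. \<beta> x * (\<phi> x)^2 - 2 * m * (\<beta> x * \<phi> x) + m^2 * \<beta> x)"
          unfolding Nbm_def \<phi>m_def by (intro sum.cong refl) (simp add: power2_eq_square algebra_simps)
        also have "\<dots> = Nb - 2 * m * (\<Sum>x\<in>V. \<beta> x * \<phi> x) + m^2 * (\<Sum>x\<in>V. \<beta> x)"
          unfolding Nb_def by (simp add: sum.distrib sum_subtractf sum_distrib_left)
        finally have "Nbm = Nb + m^2 * (\<Sum>x\<in>V. \<beta> x)" using L\<beta> by simp
        moreover have "0 \<le> m^2 * (\<Sum>x\<in>V. \<beta> x)"
          using \<beta>pos by (intro mult_nonneg_nonneg sum_nonneg) (auto simp: less_imp_le)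
        ultimately show ?thesis by simp
      qed
      have "am * Nb \<le> am * Nbm" using c3 am0 by simp
      then have "am * Nb \<le> K * Nam" using c2 by linarith
      then have "\<mu> * (am * Nb) \<le> \<mu> * (K * Nam)" using \<mu>nn by (rule mult_left_mono)
      also have "\<mu> * (K * Nam) = K * (\<mu> * Nam)" by simp
      also have "\<dots> \<le> K * (e * Nb)" using c1 K0 by simp
      finally have "(\<mu> * am) * Nb \<le> (K * e) * Nb" by (simp add: mult_ac)
      then have h: "\<mu> * am \<le> K * e" using pos unfolding Nb_def by simp
      have "am / K * gap_RW V c \<alpha> \<le> am / K * \<mu>"
        using g\<alpha> am0 K0 by (intro mult_left_mono) auto
      also have "\<dots> \<le> e" using h K0 by (simp add: pos_divide_le_eq mult.commute)
      finally show ?thesis .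
    qed
    obtain \<nu> where "\<nu> \<noteq> 0 \<and> is_eigenvalue_negA V c \<beta> \<nu> \<and> \<nu> \<ge> 0 \<and>
     (\<forall>\<phi>. (\<Sum>x\<in>V. \<beta> x * \<phi> x) = 0 \<longrightarrow> \<nu> * (\<Sum>x\<in>V. \<beta> x * (\<phi> x)^2) \<le> D2 V c \<beta> \<phi> \<phi> / 2)"
      using gap_witness[where w=\<beta>, OF fin card sym cnn conn \<beta>pos] by blast
    then have ne: "{ev. ev \<noteq> 0 \<and> is_eigenvalue_negA V c \<beta> ev} \<noteq> {}" by blast
    have "am / K * gap_RW V c \<alpha> \<le> gap_RW V c \<beta>" unfolding gap_RW_def[of V c \<beta>]
      by (rule cInf_greatest[OF ne]) (use key in blast)
    then show ?thesis unfolding \<beta>eq .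
  qed
  have Xne: "Xi V (k - 1) \<noteq> {}"
  proof -
    have "(\<lambda>x. if x = a then k - 1 else 0) \<in> Xi V (k - 1)"
      unfolding Xi_def using a fin by auto
    then show ?thesis by blast
  qed
  have "am / K * gap_RW V c \<alpha> \<le> (INF \<xi>\<in>Xi V (k - 1). gap_RW V c (\<lambda>x. \<alpha> x + real (\<xi> x)))"
    using Xne main by (intro cINF_greatest) auto
  then show ?thesis unfolding am_def K_def by simp
qed

end
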